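(* Let $Q$ be a quiver and $C\subseteq\Bbbk Q$ a subcoalgebra, with tail closure $T(C)$. Every finite dimensional right coideal of $T(C)$ is contained in the right coideal $\langle q_F\rangle^{T(C)}$ generated by an element of the form $q_F$, for some $n\ge 0$ and some finite independent set $F\subseteq M(T^n(C))$.
   Context: $\Bbbk$ is a field. Paths of $Q$ include trivial paths (vertices); concatenation $xy$ is defined when the target of $x$ is the source of $y$, extended bilinearly. The path coalgebra $\Bbbk Q$ has basis all paths, $\Delta(p)=\sum_{xy=p}x\otimes y$, $\varepsilon(p)=1$ if $p$ trivial and $0$ otherwise. A right coideal of a coalgebra $D$ is a subspace $I$ with $\Delta(I)\subseteq I\otimes D$; $\langle x\rangle^D$ is the smallest right coideal of $D$ containing $x$. A multipath is a nonzero linear combination of paths with common source $s(p)$ and common target $t(p)$; $M(D)$ is the set of multipaths in $D$; $F\subseteq M(D)$ is independent if it is linearly independent and $\langle x\rangle^D\cap F=\{x\}$ for each $x\in F$. Tail closure: for a subcoalgebra $D$ of a path coalgebra $\Bbbk R$, let $\overline{R}$ be obtained from $R$ by adding, for each finite independent $F=\{p_1,\dots,p_n\}\subseteq M(D)$, a new vertex $e_F$ and new arrows $\alpha_{i,F}:t(p_i)\to e_F$; put $q_F=\sum_i p_i\alpha_{i,F}\in\Bbbk\overline{R}$ and let $\overline{D}\subseteq\Bbbk\overline{R}$ be the subcoalgebra generated by $D$ and all $q_F$. Set $T^0(C)=C$, $T^{n+1}(C)=\overline{T^n(C)}$ (over the quivers $T^0(Q)=Q$, $T^{n+1}(Q)=\overline{T^n(Q)}$),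 and $T(C)=\bigcup_nT^n(C)$; thus for finite independent $F\subseteq M(T^n(C))$, $q_F\in T^{n+1}(C)\subseteq T(C)$. *)

theory Defs
  imports Main "HOL-Library.FSet"
begin

text \<open>A quiver is given by a vertex set V :: 'v set, an arrow set A :: 'a set and
source/target maps s t :: 'a => 'v.  A path is a pair (v, as) of a starting vertex
and a list of arrows; (v, []) is the trivial path at v.  Elements of the path
coalgebra are finitely supported functions from paths to the field.\<close>

fun chain_from :: "('a \<Rightarrow> 'v) \<Rightarrow> ('a \<Rightarrow> 'v) \<Rightarrow> 'v \<Rightarrow> 'a list \<Rightarrow> bool" where
  "chain_from s t v [] = True"
| "chain_from s t v (a # as) = (s a = v \<and> chain_from s t (t a) as)"

definition is_path :: "'v set \<Rightarrow> 'a set \<Rightarrow> ('a \<Rightarrow> 'v) \<Rightarrow> ('a \<Rightarrow> 'v) \<Rightarrow> 'v \<times> 'a list \<Rightarrow> bool" where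
  "is_path V A s t p = (fst p \<in> V \<and> set (snd p) \<subseteq> A \<and> chain_from s t (fst p) (snd p))"

definition psrc :: "'v \<times> 'a list \<Rightarrow> 'v" where
  "psrc p = fst p"

definition ptgt :: "('a \<Rightarrow> 'v) \<Rightarrow> 'v \<times> 'a list \<Rightarrow> 'v" where
  "ptgt t p = (if snd p = [] then fst p else t (last (snd p)))"

text \<open>concatenation xy (used only when ptgt x = psrc y)\<close>
definition pcat :: "'v \<times> 'a list \<Rightarrow> 'v \<times> 'a list \<Rightarrow> 'v \<times> 'a list" where
  "pcat x y = (fst x, snd x @ snd y)"

definition fin_supp :: "('b \<Rightarrow> 'k::zero) \<Rightarrow> bool" where
  "fin_supp f = finite {x. f x \<noteq> 0}"

text \<open>the path coalgebra kQ as a set of vectors\<close>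
definition pathvec :: "'v set \<Rightarrow> 'a set \<Rightarrow> ('a \<Rightarrow> 'v) \<Rightarrow> ('a \<Rightarrow> 'v)
    \<Rightarrow> ('v \<times> 'a list \<Rightarrow> 'k::zero) set" where
  "pathvec V A s t = {x. fin_supp x \<and> (\<forall>p. x p \<noteq> 0 \<longrightarrow> is_path V A s t p)}"

text \<open>Comultiplication Delta(p) = sum over xy = p of x (x) y, extended linearly;
elements of kQ (x) kQ are represented as finitely supported functions on pairs of paths.\<close>
definition comult :: "('a \<Rightarrow> 'v) \<Rightarrow> ('v \<times> 'a list \<Rightarrow> 'k::zero)
    \<Rightarrow> ('v \<times> 'a list) \<times> ('v \<times> 'a list) \<Rightarrow> 'k" where
  "comult t x uw = (if ptgt t (fst uw) = psrc (snd uw) then x (pcat (fst uw) (snd uw)) else 0)"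

definition lspan :: "('b \<Rightarrow> 'k::field) set \<Rightarrow> ('b \<Rightarrow> 'k) set" where
  "lspan S = {f. \<exists>B c. finite B \<and> B \<subseteq> S \<and> f = (\<lambda>u. \<Sum>b\<in>B. c b * b u)}"

definition subspace :: "('b \<Rightarrow> 'k::field) set \<Rightarrow> bool" where
  "subspace S = ((\<lambda>u. 0) \<in> S \<and> (\<forall>x\<in>S. \<forall>y\<in>S. (\<lambda>u. x u + y u) \<in> S)
      \<and> (\<forall>c. \<forall>x\<in>S. (\<lambda>u. c * x u) \<in> S))"

definition lin_indep :: "('b \<Rightarrow> 'k::field) set \<Rightarrow> bool" where
  "lin_indep S = (\<forall>B c. finite B \<and> B \<subseteq> S \<and> (\<forall>u. (\<Sum>b\<in>B. c b * b u) = 0)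
      \<longrightarrow> (\<forall>b\<in>B. c b = 0))"

definition fin_dim :: "('b \<Rightarrow> 'k::field) set \<Rightarrow> bool" where
  "fin_dim S = (\<exists>B. finite B \<and> S = lspan B)"

text \<open>tensor product U (x) W of subspaces, inside the functions on pairs\<close>
definition tensor :: "('b \<Rightarrow> 'k::field) set \<Rightarrow> ('c \<Rightarrow> 'k) set \<Rightarrow> ('b \<times> 'c \<Rightarrow> 'k) set" where
  "tensor U W = lspan {(\<lambda>(u, w). a u * b w) | a b. a \<in> U \<and> b \<in> W}"

definition subcoalgebra :: "('a \<Rightarrow> 'v) \<Rightarrow> ('v \<times> 'a list \<Rightarrow> 'k::field) set
    \<Rightarrow> ('v \<times> 'a list \<Rightarrow> 'k) set \<Rightarrow> bool" where
  "subcoalgebra t K S = (subspace S \<and> S \<subseteq> K \<and> (\<forall>x\<in>S. comult t x \<in> tensor S S))"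

definition gen_subcoalg :: "('a \<Rightarrow> 'v) \<Rightarrow> ('v \<times> 'a list \<Rightarrow> 'k::field) set
    \<Rightarrow> ('v \<times> 'a list \<Rightarrow> 'k) set \<Rightarrow> ('v \<times> 'a list \<Rightarrow> 'k) set" where
  "gen_subcoalg t K G = \<Inter> {S. subcoalgebra t K S \<and> G \<subseteq> S}"

definition right_coideal :: "('a \<Rightarrow> 'v) \<Rightarrow> ('v \<times> 'a list \<Rightarrow> 'k::field) set
    \<Rightarrow> ('v \<times> 'a list \<Rightarrow> 'k) set \<Rightarrow> bool" where
  "right_coideal t D I = (subspace I \<and> I \<subseteq> D \<and> (\<forall>x\<in>I. comult t x \<in> tensor I D))"

definition coideal_gen :: "('a \<Rightarrow> 'v) \<Rightarrow> ('v \<times> 'a list \<Rightarrow> 'k::field) set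
    \<Rightarrow> ('v \<times> 'a list \<Rightarrow> 'k) \<Rightarrow> ('v \<times> 'a list \<Rightarrow> 'k) set" where
  "coideal_gen t D x = \<Inter> {I. right_coideal t D I \<and> x \<in> I}"

text \<open>multipath: nonzero linear combination of paths with common source and target
(D is always a subspace of a path coalgebra, so its elements are combinations of paths)\<close>
definition multipath :: "('a \<Rightarrow> 'v) \<Rightarrow> ('v \<times> 'a list \<Rightarrow> 'k::field) \<Rightarrow> bool" where
  "multipath t x = (x \<noteq> (\<lambda>u. 0) \<and> fin_supp x \<and>
     (\<exists>v w. \<forall>p. x p \<noteq> 0 \<longrightarrow> psrc p = v \<and> ptgt t p = w))"

definition MP :: "('a \<Rightarrow> 'v) \<Rightarrow> ('v \<times> 'a list \<Rightarrow> 'k::field) set \<Rightarrow> ('v \<times> 'a list \<Rightarrow> 'k) set" where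
  "MP t D = {x \<in> D. multipath t x}"

definition independent :: "('a \<Rightarrow> 'v) \<Rightarrow> ('v \<times> 'a list \<Rightarrow> 'k::field) set
    \<Rightarrow> ('v \<times> 'a list \<Rightarrow> 'k) set \<Rightarrow> bool" where
  "independent t D F = (F \<subseteq> MP t D \<and> lin_indep F \<and> (\<forall>x\<in>F. coideal_gen t D x \<inter> F = {x}))"

text \<open>Vertices/arrows: the original ones (OV, OA) plus the new ones.  NV n F is the vertex
e_F added at step n+1 for a finite independent F in M(T^n(C)); NA n p F is the arrow
alpha_{i,F} : t(p_i) -> e_F for p = p_i in F.  Multipaths are encoded by their graph
(a finite set of (path, nonzero coefficient) pairs), sets F by the finite set of encodings.\<close>

datatype ('v, 'a, 'k) vtx =
    OV 'v
  | NV nat "((('v, 'a, 'k) vtx \<times> ('v, 'a, 'k) arr list) \<times> 'k) fset fset"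
and ('v, 'a, 'k) arr =
    OA 'a
  | NA nat "((('v, 'a, 'k) vtx \<times> ('v, 'a, 'k) arr list) \<times> 'k) fset"
           "((('v, 'a, 'k) vtx \<times> ('v, 'a, 'k) arr list) \<times> 'k) fset fset"

type_synonym ('v, 'a, 'k) bpath = "('v, 'a, 'k) vtx \<times> ('v, 'a, 'k) arr list"

definition enc :: "(('v, 'a, 'k) bpath \<Rightarrow> 'k::zero) \<Rightarrow> (('v, 'a, 'k) bpath \<times> 'k) fset" where
  "enc x = Abs_fset {(p, x p) | p. x p \<noteq> 0}"

definition encF :: "(('v, 'a, 'k) bpath \<Rightarrow> 'k::zero) set \<Rightarrow> (('v, 'a, 'k) bpath \<times> 'k) fset fset" where
  "encF F = Abs_fset (enc ` F)"

fun XT :: "('a \<Rightarrow> 'v) \<Rightarrow> ('v, 'a, 'k) arr \<Rightarrow> ('v, 'a, 'k) vtx" where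
  "XT t (OA a) = OV (t a)"
| "XT t (NA n P F) = NV n F"

text \<open>source of alpha_{i,F}: the common target of the paths of p_i\<close>
fun XS :: "('a \<Rightarrow> 'v) \<Rightarrow> ('a \<Rightarrow> 'v) \<Rightarrow> ('v, 'a, 'k) arr \<Rightarrow> ('v, 'a, 'k) vtx" where
  "XS s t (OA a) = OV (s a)"
| "XS s t (NA n P F) = ptgt (XT t) (fst (SOME z. z |\<in>| P))"

text \<open>q_F = sum_i p_i alpha_{i,F}, for F created at step n+1\<close>
definition qF :: "nat \<Rightarrow> (('v, 'a, 'k) bpath \<Rightarrow> 'k::field) set \<Rightarrow> ('v, 'a, 'k) bpath \<Rightarrow> 'k" where
  "qF n F r = (\<Sum>p\<in>F. if snd r \<noteq> [] \<and> last (snd r) = NA n (enc p) (encF F)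
                      then p (fst r, butlast (snd r)) else 0)"

text \<open>embedding of kQ into the ambient path coalgebra\<close>
definition liftQ :: "('v \<times> 'a list \<Rightarrow> 'k::zero) \<Rightarrow> ('v, 'a, 'k) bpath \<Rightarrow> 'k" where
  "liftQ x p = (if \<exists>v bs. p = (OV v, map OA bs)
                then x (SOME vb. p = (OV (fst vb), map OA (snd vb))) else 0)"

text \<open>TT s t V A C n = (vertices of T^n(Q), arrows of T^n(Q), T^n(C))\<close>
primrec TT :: "('a \<Rightarrow> 'v) \<Rightarrow> ('a \<Rightarrow> 'v) \<Rightarrow> 'v set \<Rightarrow> 'a set \<Rightarrow> ('v \<times> 'a list \<Rightarrow> 'k::field) set
    \<Rightarrow> nat \<Rightarrow> ('v, 'a, 'k) vtx set \<times> ('v, 'a, 'k) arr set \<times> (('v, 'a, 'k) bpath \<Rightarrow> 'k) set" where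
  "TT s t V A C 0 = (OV ` V, OA ` A, liftQ ` C)"
| "TT s t V A C (Suc n) =
     (let Vn = fst (TT s t V A C n); An = fst (snd (TT s t V A C n)); Dn = snd (snd (TT s t V A C n));
          Fs = {F. finite F \<and> independent (XT t) Dn F};
          V' = Vn \<union> {NV n (encF F) | F. F \<in> Fs};
          A' = An \<union> {NA n (enc p) (encF F) | F p. F \<in> Fs \<and> p \<in> F}
      in (V', A', gen_subcoalg (XT t) (pathvec V' A' (XS s t) (XT t)) (Dn \<union> {qF n F | F. F \<in> Fs})))"

definition TCn :: "('a \<Rightarrow> 'v) \<Rightarrow> ('a \<Rightarrow> 'v) \<Rightarrow> 'v set \<Rightarrow> 'a set \<Rightarrow> ('v \<times> 'a list \<Rightarrow> 'k::field) set
    \<Rightarrow> nat \<Rightarrow> (('v, 'a, 'k) bpath \<Rightarrow> 'k) set" where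
  "TCn s t V A C n = snd (snd (TT s t V A C n))"

definition TC :: "('a \<Rightarrow> 'v) \<Rightarrow> ('a \<Rightarrow> 'v) \<Rightarrow> 'v set \<Rightarrow> 'a set \<Rightarrow> ('v \<times> 'a list \<Rightarrow> 'k::field) set
    \<Rightarrow> (('v, 'a, 'k) bpath \<Rightarrow> 'k) set" where
  "TC s t V A C = (\<Union>n. TCn s t V A C n)"

end

theory Submission
  imports Defs
begin


lemma subspace_add: "subspace S \<Longrightarrow> x \<in> S \<Longrightarrow> y \<in> S \<Longrightarrow> (\<lambda>u. x u + y u) \<in> S"
  by (simp add: subspace_def)
lemma subspace_scale: "subspace S \<Longrightarrow> x \<in> S \<Longrightarrow> (\<lambda>u. c * x u) \<in> S"
  by (simp add: subspace_def)
lemma subspace_zero: "subspace S \<Longrightarrow> (\<lambda>u. 0) \<in> S"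
  by (simp add: subspace_def)

lemma subspace_sum:
  assumes "subspace S" "finite K" "\<forall>i\<in>K. g i \<in> S"
  shows "(\<lambda>u. \<Sum>i\<in>K. g i u) \<in> S"
  using assms(2,3)
proof (induction K rule: finite_induct)
  case empty then show ?case using assms(1) by (simp add: subspace_zero)
next
  case (insert x F)
  have e: "(\<lambda>u. \<Sum>i\<in>insert x F. g i u) = (\<lambda>u. g x u + (\<Sum>i\<in>F. g i u))"
    using insert(1,2) by simp
  have "(\<lambda>u. \<Sum>i\<in>F. g i u) \<in> S" using insert(3,4) by simp
  moreover have "g x \<in> S" using insert(4) by simp
  ultimately show ?case unfolding e by (rule subspace_add[OF assms(1), rotated])
qed

lemma subspace_lincomb:
  assumes "subspace S" "finite K" "\<forall>i\<in>K. g i \<in> S"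
  shows "(\<lambda>u. \<Sum>i\<in>K. c i * g i u) \<in> S"
proof (rule subspace_sum[OF assms(1,2), of "\<lambda>i u. c i * g i u", simplified], intro ballI)
  fix i assume "i \<in> K" then show "(\<lambda>u. c i * g i u) \<in> S" using assms(3) subspace_scale[OF assms(1)] by blast
qed

lemma lspanI: "finite B \<Longrightarrow> B \<subseteq> X \<Longrightarrow> f = (\<lambda>u. \<Sum>b\<in>B. c b * b u) \<Longrightarrow> f \<in> lspan X"
  unfolding lspan_def mem_Collect_eq by (rule exI[of _ B], rule exI[of _ c]) simp
lemma lspanE: assumes "f \<in> lspan X" obtains B c where "finite B" "B \<subseteq> X" "f = (\<lambda>u. \<Sum>b\<in>B. c b * b u)"
  using assms unfolding lspan_def mem_Collect_eq by (elim exE conjE)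

lemma lspan_subset:
  assumes "subspace S" "X \<subseteq> S" shows "lspan X \<subseteq> S"
proof
  fix f assume "f \<in> lspan X"
  then obtain B c where B: "finite B" "B \<subseteq> X" "f = (\<lambda>u. \<Sum>b\<in>B. c b * b u)" by (rule lspanE)
  have "(\<lambda>u. \<Sum>b\<in>B. c b * b u) \<in> S"
    by (rule subspace_lincomb[OF assms(1) B(1)]) (use B(2) assms(2) in blast)
  then show "f \<in> S" using B(3) by simp
qed

lemma lspan_base:
  assumes "x \<in> X" shows "x \<in> lspan X"
  by (rule lspanI[of "{x}" _ _ "\<lambda>_. 1"]) (use assms in simp_all)

lemma lspan_mono:
  assumes "X \<subseteq> Y" shows "lspan X \<subseteq> lspan Y"
proof
  fix f assume "f \<in> lspan X"
  then obtain B c where B: "finite B" "B \<subseteq> X" "f = (\<lambda>u. \<Sum>b\<in>B. c b * b u)" by (rule lspanE)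
  show "f \<in> lspan Y" by (rule lspanI[OF B(1) _ B(3)]) (use B(2) assms in blast)
qed

lemma subspace_lspan: "subspace (lspan X)"
  unfolding subspace_def
proof (intro conjI ballI allI)
  show "(\<lambda>u. 0) \<in> lspan X" by (rule lspanI[of "{}"]) simp_all
next
  fix x y assume x: "x \<in> lspan X" and y: "y \<in> lspan X"
  obtain B1 c1 where 1: "finite B1" "B1 \<subseteq> X" "x = (\<lambda>u. \<Sum>b\<in>B1. c1 b * b u)" using x by (rule lspanE)
  obtain B2 c2 where 2: "finite B2" "B2 \<subseteq> X" "y = (\<lambda>u. \<Sum>b\<in>B2. c2 b * b u)" using y by (rule lspanE)
  define d1 where "d1 b = (if b \<in> B1 then c1 b else 0)" for b
  define d2 where "d2 b = (if b \<in> B2 then c2 b else 0)" for b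
  have e1: "(\<Sum>b\<in>B1\<union>B2. d1 b * b u) = (\<Sum>b\<in>B1. c1 b * b u)" for u
    by (rule sum.mono_neutral_cong_right) (use 1 2 in \<open>auto simp: d1_def\<close>)
  have e2: "(\<Sum>b\<in>B1\<union>B2. d2 b * b u) = (\<Sum>b\<in>B2. c2 b * b u)" for u
    by (rule sum.mono_neutral_cong_right) (use 1 2 in \<open>auto simp: d2_def\<close>)
  have "(\<lambda>u. x u + y u) = (\<lambda>u. \<Sum>b\<in>B1\<union>B2. (d1 b + d2 b) * b u)"
  proof
    fix u
    have "(\<Sum>b\<in>B1\<union>B2. (d1 b + d2 b) * b u) = (\<Sum>b\<in>B1\<union>B2. d1 b * b u) + (\<Sum>b\<in>B1\<union>B2. d2 b * b u)"
      by (simp add: distrib_right sum.distrib)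
    then show "x u + y u = (\<Sum>b\<in>B1\<union>B2. (d1 b + d2 b) * b u)" by (simp only: e1 e2 1(3) 2(3))
  qed
  then show "(\<lambda>u. x u + y u) \<in> lspan X"
    by (rule lspanI[rotated 2]) (use 1 2 in auto)
next
  fix c x assume x: "x \<in> lspan X"
  obtain B1 c1 where 1: "finite B1" "B1 \<subseteq> X" "x = (\<lambda>u. \<Sum>b\<in>B1. c1 b * b u)" using x by (rule lspanE)
  have "(\<lambda>u. c * x u) = (\<lambda>u. \<Sum>b\<in>B1. (c * c1 b) * b u)" using 1 by (simp add: sum_distrib_left mult.assoc)
  then show "(\<lambda>u. c * x u) \<in> lspan X"
    by (rule lspanI[rotated 2]) (use 1 in auto)
qed

lemma tensor_gen: "a \<in> U \<Longrightarrow> b \<in> W \<Longrightarrow> (\<lambda>(u,w). a u * b w) \<in> tensor U W"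
  unfolding tensor_def by (rule lspan_base) blast

lemma tensor_intro:
  assumes "finite K" "\<forall>i\<in>K. a i \<in> U \<and> b i \<in> W"
  shows "(\<lambda>(u,w). \<Sum>i\<in>K. a i u * b i w) \<in> tensor U W"
proof -
  have "(\<lambda>uw. \<Sum>i\<in>K. (\<lambda>(u,w). a i u * b i w) uw) \<in> tensor U W"
    unfolding tensor_def
  proof (rule subspace_sum[OF subspace_lspan assms(1)], intro ballI)
    fix i assume "i \<in> K"
    then show "(\<lambda>(u,w). a i u * b i w) \<in> lspan {(\<lambda>(u, w). a u * b w) | a b. a \<in> U \<and> b \<in> W}"
      using tensor_gen[of "a i" U "b i" W] assms(2) unfolding tensor_def by auto
  qed
  moreover have "(\<lambda>uw. \<Sum>i\<in>K. (\<lambda>(u,w). a i u * b i w) uw) = (\<lambda>(u,w). \<Sum>i\<in>K. a i u * b i w)"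
    by (auto simp: fun_eq_iff)
  ultimately show ?thesis by simp
qed

lemma tensor_elim:
  fixes U :: "('b \<Rightarrow> 'k::field) set" and W :: "('c \<Rightarrow> 'k) set"
  assumes "subspace U" "z \<in> tensor U W"
  obtains K :: "('b \<times> 'c \<Rightarrow> 'k) set" and a b where "finite K" "\<forall>i\<in>K. a i \<in> U \<and> b i \<in> W" "z = (\<lambda>(u,w). \<Sum>i\<in>K. a i u * b i w)"
proof -
  obtain B c where B: "finite B" "B \<subseteq> {(\<lambda>(u, w). a u * b w) | a b. a \<in> U \<and> b \<in> W}"
      "z = (\<lambda>u. \<Sum>b\<in>B. c b * b u)"
    using assms(2) unfolding tensor_def by (rule lspanE)
  have ex: "\<forall>g\<in>B. \<exists>ab. fst ab \<in> U \<and> snd ab \<in> W \<and> g = (\<lambda>(u, w). fst ab u * snd ab w)"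
  proof
    fix g assume "g \<in> B"
    then obtain a b where "a \<in> U" "b \<in> W" "g = (\<lambda>(u, w). a u * b w)" using B(2) by blast
    then show "\<exists>ab. fst ab \<in> U \<and> snd ab \<in> W \<and> g = (\<lambda>(u, w). fst ab u * snd ab w)"
      by (intro exI[of _ "(a,b)"]) simp
  qed
  obtain ab where ab: "\<forall>g\<in>B. fst (ab g) \<in> U \<and> snd (ab g) \<in> W \<and> g = (\<lambda>(u, w). fst (ab g) u * snd (ab g) w)"
    using bchoice[OF ex] by blast
  define a where "a g = (\<lambda>u. c g * fst (ab g) u)" for g
  define b where "b g = snd (ab g)" for g
  have 1: "\<forall>i\<in>B. a i \<in> U \<and> b i \<in> W" using ab subspace_scale[OF assms(1)] by (auto simp: a_def b_def)
  have 2: "z = (\<lambda>(u,w). \<Sum>i\<in>B. a i u * b i w)"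
  proof -
    have "c g * g (u,w) = a g u * b g w" if "g \<in> B" for g u w
    proof -
      have "g (u,w) = fst (ab g) u * snd (ab g) w" using ab that by (metis case_prod_conv)
      then show ?thesis by (simp add: a_def b_def mult.assoc)
    qed
    then show ?thesis unfolding B(3) by (auto simp: fun_eq_iff intro: sum.cong)
  qed
  show ?thesis by (rule that[OF B(1) 1 2])
qed

lemma tensor_contr_r:
  fixes U :: "('b \<Rightarrow> 'k::field) set" and W :: "('c \<Rightarrow> 'k) set"
  assumes "subspace U" "z \<in> tensor U W" shows "(\<lambda>u. z (u, r)) \<in> U"
proof -
  obtain K :: "('b \<times> 'c \<Rightarrow> 'k) set" and a b where K: "finite K" "\<forall>i\<in>K. a i \<in> U \<and> b i \<in> W" "z = (\<lambda>(u,w). \<Sum>i\<in>K. a i u * b i w)"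
    by (rule tensor_elim[OF assms])
  have "(\<lambda>u. \<Sum>i\<in>K. b i r * a i u) \<in> U" by (rule subspace_lincomb[OF assms(1) K(1)]) (use K in auto)
  then show ?thesis using K(3) by (simp add: mult.commute)
qed

lemma tensor_contr_l:
  fixes U :: "('b \<Rightarrow> 'k::field) set" and W :: "('c \<Rightarrow> 'k) set"
  assumes "subspace U" "subspace W" "z \<in> tensor U W" shows "(\<lambda>w. z (r, w)) \<in> W"
proof -
  obtain K :: "('b \<times> 'c \<Rightarrow> 'k) set" and a b where K: "finite K" "\<forall>i\<in>K. a i \<in> U \<and> b i \<in> W" "z = (\<lambda>(u,w). \<Sum>i\<in>K. a i u * b i w)"
    by (rule tensor_elim[OF assms(1,3)])
  have "(\<lambda>w. \<Sum>i\<in>K. a i r * b i w) \<in> W" by (rule subspace_lincomb[OF assms(2) K(1)]) (use K in auto)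
  then show ?thesis using K(3) by simp
qed

lemma key_identity:
  fixes a b c :: "'i \<Rightarrow> 'k::field"
  assumes "finite K" "k \<in> K" "c k \<noteq> 0"
  shows "(\<Sum>i\<in>K. a i * b i) = (\<Sum>i\<in>K-{k}. a i * (b i - (c i / c k) * b k)) + (inverse (c k) * (\<Sum>i\<in>K. a i * c i)) * b k"
proof -
  have s1: "(\<Sum>i\<in>K. a i * b i) = a k * b k + (\<Sum>i\<in>K-{k}. a i * b i)" using assms by (simp add: sum.remove)
  have s2: "(\<Sum>i\<in>K. a i * c i) = a k * c k + (\<Sum>i\<in>K-{k}. a i * c i)" using assms by (simp add: sum.remove)
  have s3: "(\<Sum>i\<in>K-{k}. a i * (b i - (c i / c k) * b k)) = (\<Sum>i\<in>K-{k}. a i * b i) - inverse (c k) * b k * (\<Sum>i\<in>K-{k}. a i * c i)"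
  proof -
    have "(\<Sum>i\<in>K-{k}. a i * (b i - (c i / c k) * b k)) = (\<Sum>i\<in>K-{k}. a i * b i - inverse (c k) * b k * (a i * c i))"
      by (rule sum.cong) (simp_all add: field_simps)
    also have "\<dots> = (\<Sum>i\<in>K-{k}. a i * b i) - inverse (c k) * b k * (\<Sum>i\<in>K-{k}. a i * c i)"
      by (simp add: sum_subtractf sum_distrib_left)
    finally show ?thesis .
  qed
  have "inverse (c k) * (a k * c k + X) * b k = a k * b k + inverse (c k) * b k * X" for X
    using assms(3) by (simp add: field_simps)
  then show ?thesis unfolding s1 s2 s3 by simp
qed



lemma tens_reduce:
  fixes S :: "('b \<Rightarrow> 'k::field) set" and W :: "('c \<Rightarrow> 'k) set"
  assumes S: "subspace S" and W: "subspace W"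
  shows "finite K \<Longrightarrow> (\<forall>i\<in>K. b i \<in> W) \<Longrightarrow> (\<forall>r. (\<lambda>u. \<Sum>i\<in>K. a i u * b i r) \<in> S)
     \<Longrightarrow> (\<lambda>(u,w). \<Sum>i\<in>K. a i u * b i w) \<in> tensor S W"
proof (induction K arbitrary: b rule: finite_psubset_induct)
  case (psubset K)
  show ?case
  proof (cases "\<exists>k\<in>K. \<exists>r. b k r \<noteq> 0")
    case False
    then have "(\<lambda>(u,w). \<Sum>i\<in>K. a i u * b i w) = (\<lambda>uw. 0)" by (auto simp: fun_eq_iff)
    then show ?thesis using subspace_zero[OF subspace_lspan] unfolding tensor_def by simp
  next
    case True
    then obtain k r0 where k: "k \<in> K" "b k r0 \<noteq> 0" by blast
    define \<beta> where "\<beta> = b k r0"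
    define s' where "s' = (\<lambda>u. inverse \<beta> * (\<Sum>i\<in>K. a i u * b i r0))"
    define b' where "b' i = (\<lambda>w. b i w + (- (b i r0 / \<beta>)) * b k w)" for i
    have s'S: "s' \<in> S" unfolding s'_def using subspace_scale[OF S psubset.prems(2)[rule_format, of r0]] by simp
    have b'W: "\<forall>i\<in>K-{k}. b' i \<in> W"
    proof
      fix i assume "i \<in> K - {k}"
      then have "b i \<in> W" "b k \<in> W" using psubset.prems(1) k(1) by auto
      then show "b' i \<in> W" unfolding b'_def by (intro subspace_add[OF W] subspace_scale[OF W])
    qed
    have id: "(\<Sum>i\<in>K. a i u * b i w) = (\<Sum>i\<in>K-{k}. a i u * b' i w) + s' u * b k w" for u w
    proof -
      have "(\<Sum>i\<in>K. a i u * b i w) = (\<Sum>i\<in>K-{k}. a i u * (b i w - (b i r0 / b k r0) * b k w)) + (inverse (b k r0) * (\<Sum>i\<in>K. a i u * b i r0)) * b k w"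
        using key_identity[where a="\<lambda>i. a i u" and b="\<lambda>i. b i w" and c="\<lambda>i. b i r0", OF psubset.hyps(1) k(1)] k(2) by simp
      then show ?thesis by (simp add: b'_def s'_def \<beta>_def)
    qed
    have ih: "(\<lambda>(u,w). \<Sum>i\<in>K-{k}. a i u * b' i w) \<in> tensor S W"
    proof (rule psubset.IH)
      show "K - {k} \<subset> K" using k(1) by blast
      show "\<forall>i\<in>K-{k}. b' i \<in> W" by (rule b'W)
      show "\<forall>r. (\<lambda>u. \<Sum>i\<in>K-{k}. a i u * b' i r) \<in> S"
      proof
        fix r
        have "(\<lambda>u. \<Sum>i\<in>K-{k}. a i u * b' i r) = (\<lambda>u. (\<Sum>i\<in>K. a i u * b i r) + (- b k r) * s' u)"
          using id[of _ r] by (auto simp: fun_eq_iff algebra_simps)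
        moreover have "(\<lambda>u. (\<Sum>i\<in>K. a i u * b i r) + (- b k r) * s' u) \<in> S"
          by (rule subspace_add[OF S psubset.prems(2)[rule_format, of r] subspace_scale[OF S s'S]])
        ultimately show "(\<lambda>u. \<Sum>i\<in>K-{k}. a i u * b' i r) \<in> S" by simp
      qed
    qed
    have g: "(\<lambda>(u,w). s' u * b k w) \<in> tensor S W"
      by (rule tensor_gen[OF s'S]) (use psubset.prems(1) k(1) in blast)
    have "(\<lambda>uw. (\<lambda>(u,w). \<Sum>i\<in>K-{k}. a i u * b' i w) uw + (\<lambda>(u,w). s' u * b k w) uw) \<in> tensor S W"
      unfolding tensor_def by (rule subspace_add[OF subspace_lspan ih[unfolded tensor_def] g[unfolded tensor_def]])
    moreover have "(\<lambda>uw. (\<lambda>(u,w). \<Sum>i\<in>K-{k}. a i u * b' i w) uw + (\<lambda>(u,w). s' u * b k w) uw)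
       = (\<lambda>(u,w). \<Sum>i\<in>K. a i u * b i w)"
      using id by (auto simp: fun_eq_iff)
    ultimately show ?thesis by simp
  qed
qed

lemma tensor_swap:
  fixes U :: "('b \<Rightarrow> 'k::field) set" and W :: "('c \<Rightarrow> 'k) set"
  assumes "subspace U" "z \<in> tensor U W" shows "(\<lambda>(w,u). z (u,w)) \<in> tensor W U"
proof -
  obtain K :: "('b \<times> 'c \<Rightarrow> 'k) set" and a b where K: "finite K" "\<forall>i\<in>K. a i \<in> U \<and> b i \<in> W" "z = (\<lambda>(u,w). \<Sum>i\<in>K. a i u * b i w)"
    by (rule tensor_elim[OF assms])
  have "(\<lambda>(w,u). \<Sum>i\<in>K. b i w * a i u) \<in> tensor W U" by (rule tensor_intro) (use K in auto)
  moreover have "(\<lambda>(w,u). z (u,w)) = (\<lambda>(w,u). \<Sum>i\<in>K. b i w * a i u)"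
    using K(3) by (auto simp: fun_eq_iff mult.commute)
  ultimately show ?thesis by simp
qed

lemma tensor_restrict:
  fixes U S1 :: "('b \<Rightarrow> 'k::field) set" and W S2 :: "('c \<Rightarrow> 'k) set"
  assumes U: "subspace U" and W: "subspace W" and S1: "subspace S1" and S2: "subspace S2"
    and z: "z \<in> tensor U W" and r: "\<forall>r. (\<lambda>u. z (u, r)) \<in> S1" and l: "\<forall>r. (\<lambda>w. z (r, w)) \<in> S2"
  shows "z \<in> tensor S1 S2"
proof -
  obtain K :: "('b \<times> 'c \<Rightarrow> 'k) set" and a b where K: "finite K" "\<forall>i\<in>K. a i \<in> U \<and> b i \<in> W" "z = (\<lambda>(u,w). \<Sum>i\<in>K. a i u * b i w)"
    by (rule tensor_elim[OF U z])
  have z1: "z \<in> tensor S1 W"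
    unfolding K(3)
    by (rule tens_reduce[OF S1 W K(1)]) (use K r in auto)
  have z2: "(\<lambda>(w,u). z (u,w)) \<in> tensor W S1" by (rule tensor_swap[OF S1 z1])
  obtain K' :: "('c \<times> 'b \<Rightarrow> 'k) set" and a' b' where K': "finite K'" "\<forall>i\<in>K'. a' i \<in> W \<and> b' i \<in> S1" "(\<lambda>(w,u). z (u,w)) = (\<lambda>(w,u). \<Sum>i\<in>K'. a' i w * b' i u)"
    by (rule tensor_elim[OF W z2])
  have e: "(\<lambda>w. \<Sum>i\<in>K'. a' i w * b' i r) = (\<lambda>w. z (r, w))" for r
  proof
    fix w show "(\<Sum>i\<in>K'. a' i w * b' i r) = z (r, w)" using fun_cong[OF K'(3), of "(w,r)"] by simp
  qed
  have z3: "(\<lambda>(w,u). \<Sum>i\<in>K'. a' i w * b' i u) \<in> tensor S2 S1"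
    by (rule tens_reduce[OF S2 S1 K'(1)]) (use K'(2) l e in auto)
  have "(\<lambda>(u,w). (\<lambda>(w,u). \<Sum>i\<in>K'. a' i w * b' i u) (w,u)) \<in> tensor S1 S2"
    by (rule tensor_swap[OF S2 z3])
  moreover have "(\<lambda>(u,w). (\<lambda>(w,u). \<Sum>i\<in>K'. a' i w * b' i u) (w,u)) = z"
  proof
    fix uw show "(\<lambda>(u,w). (\<lambda>(w,u). \<Sum>i\<in>K'. a' i w * b' i u) (w,u)) uw = z uw"
      using fun_cong[OF K'(3), of "(snd uw, fst uw)"] by (cases uw) simp
  qed
  ultimately show ?thesis by simp
qed



definition rc :: "('a \<Rightarrow> 'v) \<Rightarrow> ('v \<times> 'a list \<Rightarrow> 'k::field) \<Rightarrow> 'v \<times> 'a list \<Rightarrow> ('v \<times> 'a list \<Rightarrow> 'k)" where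
  "rc t x r = (\<lambda>u. comult t x (u, r))"

definition Cl :: "('a \<Rightarrow> 'v) \<Rightarrow> ('v \<times> 'a list \<Rightarrow> 'k::field) \<Rightarrow> ('v \<times> 'a list \<Rightarrow> 'k) set" where
  "Cl t x = lspan (range (rc t x))"

lemma sc_subspace: "subcoalgebra t K D \<Longrightarrow> subspace D"
  by (simp add: subcoalgebra_def)

lemma sc_rc: assumes "subcoalgebra t K D" "x \<in> D" shows "rc t x r \<in> D"
proof -
  have "subspace D" "comult t x \<in> tensor D D" using assms unfolding subcoalgebra_def by auto
  then show ?thesis unfolding rc_def by (rule tensor_contr_r)
qed

lemma sc_lc: assumes "subcoalgebra t K D" "x \<in> D" shows "(\<lambda>w. comult t x (r, w)) \<in> D"
proof -
  have "subspace D" "comult t x \<in> tensor D D" using assms unfolding subcoalgebra_def by auto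
  then show ?thesis using tensor_contr_l[of D D "comult t x" r] by simp
qed

lemma sc_Inter:
  assumes ne: "\<SS> \<noteq> {}" and all: "\<forall>S\<in>\<SS>. subcoalgebra t K S"
  shows "subcoalgebra t K (\<Inter>\<SS>)"
proof -
  have sS: "subspace S" if "S \<in> \<SS>" for S using all that sc_subspace by blast
  have sub: "subspace (\<Inter>\<SS>)"
    unfolding subspace_def
  proof (intro conjI ballI allI InterI)
    fix S assume "S \<in> \<SS>" then show "(\<lambda>u. 0) \<in> S" using sS subspace_zero by blast
  next
    fix x y S assume "x \<in> \<Inter>\<SS>" "y \<in> \<Inter>\<SS>" "S \<in> \<SS>"
    then show "(\<lambda>u. x u + y u) \<in> S" using sS[of S] subspace_add[of S x y] by blast
  next
    fix c x S assume "x \<in> \<Inter>\<SS>" "S \<in> \<SS>"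
    then show "(\<lambda>u. c * x u) \<in> S" using sS[of S] subspace_scale[of S x c] by blast
  qed
  obtain S0 where S0: "S0 \<in> \<SS>" using ne by blast
  have "comult t x \<in> tensor (\<Inter>\<SS>) (\<Inter>\<SS>)" if x: "x \<in> \<Inter>\<SS>" for x
  proof (rule tensor_restrict[where U=S0 and W=S0])
    show "subspace S0" using all S0 sc_subspace by blast
    show "subspace S0" using all S0 sc_subspace by blast
    show "subspace (\<Inter>\<SS>)" by (rule sub)
    show "subspace (\<Inter>\<SS>)" by (rule sub)
    show "comult t x \<in> tensor S0 S0" using all S0 x unfolding subcoalgebra_def by blast
    show "\<forall>r. (\<lambda>u. comult t x (u, r)) \<in> \<Inter>\<SS>"
    proof (intro allI InterI)
      fix r S assume "S \<in> \<SS>"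
      then show "(\<lambda>u. comult t x (u, r)) \<in> S" using sc_rc[of t K S x r] all x unfolding rc_def by blast
    qed
    show "\<forall>r. (\<lambda>w. comult t x (r, w)) \<in> \<Inter>\<SS>"
    proof (intro allI InterI)
      fix r S assume "S \<in> \<SS>"
      then show "(\<lambda>w. comult t x (r, w)) \<in> S" using sc_lc[of t K S x r] all x by blast
    qed
  qed
  moreover have "\<Inter>\<SS> \<subseteq> K" using all S0 unfolding subcoalgebra_def by blast
  ultimately show ?thesis using sub unfolding subcoalgebra_def by blast
qed

lemma ptgt_pcat: "ptgt t u = psrc r2 \<Longrightarrow> ptgt t (pcat u r2) = ptgt t r2"
  by (auto simp: ptgt_def pcat_def psrc_def)

lemma rc_rc: "rc t (rc t x r1) r2 = (if ptgt t r2 = psrc r1 then rc t x (pcat r2 r1) else (\<lambda>u. 0))"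
proof (cases "ptgt t r2 = psrc r1")
  case True
  have "rc t (rc t x r1) r2 u = rc t x (pcat r2 r1) u" for u
  proof (cases "ptgt t u = psrc r2")
    case True
    then show ?thesis using \<open>ptgt t r2 = psrc r1\<close> ptgt_pcat[OF True]
      by (simp add: rc_def comult_def pcat_def psrc_def)
  next
    case False
    then show ?thesis by (simp add: rc_def comult_def pcat_def psrc_def)
  qed
  then show ?thesis using True by auto
next
  case False
  have "rc t (rc t x r1) r2 u = 0" for u
    using ptgt_pcat[of t u r2] False by (auto simp add: rc_def comult_def)
  then show ?thesis using False by auto
qed

lemma rc_lincomb: "rc t (\<lambda>u. \<Sum>b\<in>B. c b * b u) r = (\<lambda>u. \<Sum>b\<in>B. c b * rc t b r u)"
  by (auto simp: rc_def comult_def fun_eq_iff)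

lemma lspan_rc_closed:
  assumes "\<forall>y\<in>X. \<forall>r. rc t y r \<in> lspan X" "y \<in> lspan X"
  shows "rc t y r \<in> lspan X"
proof -
  obtain B c where B: "finite B" "B \<subseteq> X" "y = (\<lambda>u. \<Sum>b\<in>B. c b * b u)" using assms(2) by (rule lspanE)
  have "(\<lambda>u. \<Sum>b\<in>B. c b * rc t b r u) \<in> lspan X"
    by (rule subspace_lincomb[OF subspace_lspan B(1), of "\<lambda>b. rc t b r"]) (use B(2) assms(1) in blast)
  then show ?thesis unfolding B(3) rc_lincomb .
qed

lemma Cl_closed:
  assumes "y \<in> Cl t x" shows "rc t y r \<in> Cl t x"
  unfolding Cl_def
proof (rule lspan_rc_closed[OF _ assms[unfolded Cl_def]], intro ballI allI)
  fix y r assume "y \<in> range (rc t x)"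
  then obtain r1 where y: "y = rc t x r1" by blast
  show "rc t y r \<in> lspan (range (rc t x))"
  proof (cases "ptgt t r = psrc r1")
    case True
    then show ?thesis unfolding y rc_rc by (simp add: lspan_base)
  next
    case False
    then show ?thesis unfolding y rc_rc using subspace_zero[OF subspace_lspan] by simp
  qed
qed

lemma Cl_sub: "subcoalgebra t K D \<Longrightarrow> x \<in> D \<Longrightarrow> Cl t x \<subseteq> D"
  unfolding Cl_def by (rule lspan_subset) (auto intro: sc_subspace sc_rc)

lemma mp_in_Cl:
  assumes "multipath t x" shows "x \<in> Cl t x"
proof -
  obtain v w where vw: "\<forall>p. x p \<noteq> 0 \<longrightarrow> psrc p = v \<and> ptgt t p = w" using assms unfolding multipath_def by blast
  have "rc t x (w, []) = x"
  proof
    fix u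
    show "rc t x (w, []) u = x u"
      using vw[rule_format, of u] by (cases u) (auto simp: rc_def comult_def psrc_def pcat_def)
  qed
  then show ?thesis unfolding Cl_def by (metis lspan_base rangeI)
qed

lemma Cl_coideal:
  assumes D: "subcoalgebra t K D" and x: "x \<in> D"
  shows "right_coideal t D (Cl t x)"
proof -
  have sD: "subspace D" using D by (rule sc_subspace)
  have sC: "subspace (Cl t x)" unfolding Cl_def by (rule subspace_lspan)
  have CD: "Cl t x \<subseteq> D" by (rule Cl_sub[OF D x])
  have "comult t y \<in> tensor (Cl t x) D" if y: "y \<in> Cl t x" for y
  proof (rule tensor_restrict[OF sD sD sC sD])
    show "comult t y \<in> tensor D D" using D y CD unfolding subcoalgebra_def by blast
    show "\<forall>r. (\<lambda>u. comult t y (u, r)) \<in> Cl t x" using Cl_closed[OF y] unfolding rc_def by blast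
    show "\<forall>r. (\<lambda>w. comult t y (r, w)) \<in> D" using sc_lc[OF D] y CD by blast
  qed
  then show ?thesis unfolding right_coideal_def using sC CD by blast
qed

lemma coideal_gen_le:
  assumes "subcoalgebra t K D" "multipath t x" "x \<in> D"
  shows "coideal_gen t D x \<subseteq> Cl t x"
  unfolding coideal_gen_def using Cl_coideal[OF assms(1,3)] mp_in_Cl[OF assms(2)] by blast

lemma coideal_gen_self: "x \<in> coideal_gen t D x"
  unfolding coideal_gen_def by blast

lemma rcoid_rc: assumes "right_coideal t D J" "y \<in> J" shows "rc t y r \<in> J"
proof -
  have "subspace J" "comult t y \<in> tensor J D" using assms unfolding right_coideal_def by auto
  then show ?thesis unfolding rc_def by (rule tensor_contr_r)
qed

lemma rcoid_Cl: "right_coideal t D J \<Longrightarrow> x \<in> J \<Longrightarrow> Cl t x \<subseteq> J"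
  unfolding Cl_def by (rule lspan_subset) (auto simp: right_coideal_def intro: rcoid_rc)



definition pcomp :: "('a \<Rightarrow> 'v) \<Rightarrow> ('v \<times> 'a list \<Rightarrow> 'k::field) \<Rightarrow> 'v \<Rightarrow> 'v \<Rightarrow> ('v \<times> 'a list \<Rightarrow> 'k)" where
  "pcomp t x v w = (\<lambda>u. if psrc u = v \<and> ptgt t u = w then x u else 0)"

lemma pcomp_eq: "pcomp t x v w = (\<lambda>u. comult t (rc t x (w, [])) ((v, []), u))"
proof
  fix u
  show "pcomp t x v w u = comult t (rc t x (w, [])) ((v, []), u)"
    by (cases u) (auto simp: pcomp_def rc_def comult_def psrc_def ptgt_def pcat_def)
qed

lemma pcomp_in: "subcoalgebra t K D \<Longrightarrow> x \<in> D \<Longrightarrow> pcomp t x v w \<in> D"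
  unfolding pcomp_eq by (rule sc_lc) (auto intro: sc_rc)

definition Span :: "('a \<Rightarrow> 'v) \<Rightarrow> ('v \<times> 'a list \<Rightarrow> 'k::field) set \<Rightarrow> ('v \<times> 'a list \<Rightarrow> 'k) set" where
  "Span t F = lspan (\<Union>f\<in>F. Cl t f)"

lemma Span_closed: "y \<in> Span t F \<Longrightarrow> rc t y r \<in> Span t F"
  unfolding Span_def
proof (rule lspan_rc_closed, intro ballI allI)
  fix z r assume "z \<in> (\<Union>f\<in>F. Cl t f)"
  then obtain f where "f \<in> F" "z \<in> Cl t f" by blast
  then have "rc t z r \<in> (\<Union>f\<in>F. Cl t f)" using Cl_closed by blast
  then show "rc t z r \<in> lspan (\<Union>f\<in>F. Cl t f)" by (rule lspan_base)
qed

lemma Cl_in_Span: "y \<in> Span t F \<Longrightarrow> Cl t y \<subseteq> Span t F"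
  unfolding Cl_def
  by (rule lspan_subset) (auto simp: Span_def subspace_lspan intro: Span_closed[unfolded Span_def])

lemma choose_F:
  assumes D: "subcoalgebra t K D" and Kf: "\<forall>x\<in>K. fin_supp x" and B: "finite B" "B \<subseteq> D"
  shows "\<exists>F. finite F \<and> independent t D F \<and> B \<subseteq> Span t F"
proof -
  have finx: "finite {p. x p \<noteq> 0}" if "x \<in> B" for x
    using that B(2) D Kf unfolding subcoalgebra_def fin_supp_def by blast
  define G where "G = (\<Union>x\<in>B. (\<lambda>p. pcomp t x (psrc p) (ptgt t p)) ` {p. x p \<noteq> 0})"
  have Gfin: "finite G" unfolding G_def using B(1) finx by blast
  have GMP: "G \<subseteq> MP t D"
  proof
    fix g assume "g \<in> G"
    then obtain x p where x: "x \<in> B" "x p \<noteq> 0" and g: "g = pcomp t x (psrc p) (ptgt t p)" unfolding G_def by blast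
    have "g \<in> D" unfolding g using pcomp_in[OF D] x B(2) by blast
    moreover have "g \<noteq> (\<lambda>u. 0)"
    proof
      assume "g = (\<lambda>u. 0)" then have "g p = 0" by simp
      then show False using x(2) by (simp add: g pcomp_def)
    qed
    moreover have "fin_supp g"
    proof -
      have "{u. g u \<noteq> 0} \<subseteq> {u. x u \<noteq> 0}" by (auto simp: g pcomp_def)
      then show ?thesis using finx[OF x(1)] unfolding fin_supp_def by (rule finite_subset)
    qed
    moreover have "\<forall>u. g u \<noteq> 0 \<longrightarrow> psrc u = psrc p \<and> ptgt t u = ptgt t p" by (auto simp: g pcomp_def)
    ultimately show "g \<in> MP t D" unfolding MP_def multipath_def by blast
  qed
  have GCl: "g \<in> Cl t g" if "g \<in> G" for g using GMP that mp_in_Cl unfolding MP_def by blast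
  have BG: "B \<subseteq> lspan G"
  proof
    fix x assume x: "x \<in> B"
    define Gx where "Gx = (\<lambda>p. pcomp t x (psrc p) (ptgt t p)) ` {p. x p \<noteq> 0}"
    have Gx: "finite Gx" "Gx \<subseteq> G" using finx[OF x] x unfolding Gx_def G_def by auto
    have "x u = (\<Sum>g\<in>Gx. 1 * g u)" for u
    proof (cases "x u = 0")
      case True
      have "g u = 0" if "g \<in> Gx" for g using that True unfolding Gx_def by (auto simp: pcomp_def)
      then show ?thesis using True by (simp add: sum.neutral)
    next
      case False
      define g0 where "g0 = pcomp t x (psrc u) (ptgt t u)"
      have g0: "g0 \<in> Gx" using False unfolding Gx_def g0_def by blast
      have "g u = 0" if gg: "g \<in> Gx - {g0}" for g
      proof -
        obtain p where p: "g = pcomp t x (psrc p) (ptgt t p)" using gg unfolding Gx_def by blast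
        have "\<not> (psrc u = psrc p \<and> ptgt t u = ptgt t p)" using gg p g0_def by auto
        then show ?thesis unfolding p pcomp_def by auto
      qed
      then have "(\<Sum>g\<in>Gx - {g0}. g u) = 0" by (intro sum.neutral) blast
      then have "(\<Sum>g\<in>Gx. 1 * g u) = 1 * g0 u" using Gx(1) g0 by (simp add: sum.remove)
      then show ?thesis by (simp add: g0_def pcomp_def)
    qed
    then have "x = (\<lambda>u. \<Sum>g\<in>Gx. 1 * g u)" by blast
    then show "x \<in> lspan G" by (rule lspanI[OF Gx])
  qed
  define P where "P F = (F \<subseteq> G \<and> G \<subseteq> Span t F)" for F
  have PG: "P G" unfolding P_def Span_def
  proof (intro conjI subsetI)
    fix g assume "g \<in> G"
    then have "g \<in> (\<Union>f\<in>G. Cl t f)" using GCl by blast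
    then show "g \<in> lspan (\<Union>f\<in>G. Cl t f)" by (rule lspan_base)
  qed simp
  obtain F where F: "P F" and Fmin: "\<forall>F'. P F' \<longrightarrow> card F \<le> card F'"
    using ex_has_least_nat[of P G card, OF PG] by blast
  have FG: "F \<subseteq> G" and GF: "G \<subseteq> Span t F" using F unfolding P_def by auto
  have Ffin: "finite F" using FG Gfin finite_subset by blast
  have FCl: "f \<in> Cl t f" if "f \<in> F" for f using GCl FG that by blast
  have MIN: False if f0: "f0 \<in> F" and sub: "Cl t f0 \<subseteq> Span t (F - {f0})" for f0
  proof -
    have "(\<Union>f\<in>F. Cl t f) \<subseteq> Span t (F - {f0})"
    proof
      fix z assume "z \<in> (\<Union>f\<in>F. Cl t f)"
      then obtain f where f: "f \<in> F" "z \<in> Cl t f" by blast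
      show "z \<in> Span t (F - {f0})"
      proof (cases "f = f0")
        case True then show ?thesis using sub f by blast
      next
        case False
        then have "z \<in> (\<Union>f\<in>F - {f0}. Cl t f)" using f by blast
        then show ?thesis unfolding Span_def by (rule lspan_base)
      qed
    qed
    then have "Span t F \<subseteq> Span t (F - {f0})"
      unfolding Span_def[of t F] by (rule lspan_subset[OF subspace_lspan[of "\<Union>f\<in>F - {f0}. Cl t f", folded Span_def]])
    then have "P (F - {f0})" using FG GF unfolding P_def by blast
    then have "card F \<le> card (F - {f0})" using Fmin by blast
    moreover have "card (F - {f0}) < card F" using Ffin f0 by (rule card_Diff1_less)
    ultimately show False by simp
  qed
  have linF: "lin_indep F"
    unfolding lin_indep_def
  proof (intro allI impI ballI)
    fix B' c b0
    assume a: "finite B' \<and> B' \<subseteq> F \<and> (\<forall>u. (\<Sum>b\<in>B'. c b * b u) = 0)" and b0: "b0 \<in> B'"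
    show "c b0 = 0"
    proof (rule ccontr)
      assume cb0: "c b0 \<noteq> 0"
      have "b0 u = (\<Sum>b\<in>B'-{b0}. (- c b / c b0) * b u)" for u
      proof -
        have "(\<Sum>b\<in>B'. c b * b u) = c b0 * b0 u + (\<Sum>b\<in>B'-{b0}. c b * b u)"
          using a b0 by (simp add: sum.remove)
        then have "0 = c b0 * b0 u + (\<Sum>b\<in>B'-{b0}. c b * b u)" using a by simp
        then have "c b0 * b0 u = - (\<Sum>b\<in>B'-{b0}. c b * b u)" by (simp add: eq_neg_iff_add_eq_0)
        moreover have "b0 u = (c b0 * b0 u) / c b0" using cb0 by simp
        ultimately have "b0 u = - (\<Sum>b\<in>B'-{b0}. c b * b u) / c b0" by simp
        also have "\<dots> = (\<Sum>b\<in>B'-{b0}. (- c b / c b0) * b u)"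
          by (simp add: sum_divide_distrib sum_negf)
        finally show ?thesis .
      qed
      then have "b0 = (\<lambda>u. \<Sum>b\<in>B'-{b0}. (- c b / c b0) * b u)" by blast
      moreover have "B' - {b0} \<subseteq> Span t (F - {b0})"
      proof
        fix b assume b: "b \<in> B' - {b0}"
        then have "b \<in> (\<Union>f\<in>F - {b0}. Cl t f)" using a FCl by blast
        then show "b \<in> Span t (F - {b0})" unfolding Span_def by (rule lspan_base)
      qed
      moreover have "(\<lambda>u. \<Sum>b\<in>B'-{b0}. (- c b / c b0) * b u) \<in> Span t (F - {b0})"
        by (rule subspace_lincomb[OF subspace_lspan[of "\<Union>f\<in>F - {b0}. Cl t f", folded Span_def]])
           (use a calculation(2) in auto)
      ultimately have "b0 \<in> Span t (F - {b0})" by simp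
      then have "Cl t b0 \<subseteq> Span t (F - {b0})" by (rule Cl_in_Span)
      then show False using MIN b0 a by blast
    qed
  qed
  have cgF: "coideal_gen t D x \<inter> F = {x}" if x: "x \<in> F" for x
  proof
    show "{x} \<subseteq> coideal_gen t D x \<inter> F" using x coideal_gen_self by blast
  next
    show "coideal_gen t D x \<inter> F \<subseteq> {x}"
    proof
      fix y assume y: "y \<in> coideal_gen t D x \<inter> F"
      show "y \<in> {x}"
      proof (rule ccontr)
        assume yx: "y \<notin> {x}"
        have xMP: "x \<in> MP t D" using x FG GMP by blast
        have yC: "y \<in> Cl t x" using coideal_gen_le[OF D] xMP y unfolding MP_def by blast
        have "Cl t y \<subseteq> Cl t x" unfolding Cl_def[of t y]
        proof (rule lspan_subset)
          show "subspace (Cl t x)" unfolding Cl_def by (rule subspace_lspan)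
          show "range (rc t y) \<subseteq> Cl t x" using Cl_closed[OF yC] by blast
        qed
        moreover have "Cl t x \<subseteq> Span t (F - {y})"
        proof
          fix z assume "z \<in> Cl t x"
          then have "z \<in> (\<Union>f\<in>F - {y}. Cl t f)" using x yx by blast
          then show "z \<in> Span t (F - {y})" unfolding Span_def by (rule lspan_base)
        qed
        ultimately show False using MIN y by blast
      qed
    qed
  qed
  have "independent t D F" unfolding independent_def using FG GMP linF cgF by blast
  moreover have "B \<subseteq> Span t F"
    using BG lspan_subset[OF subspace_lspan[of "\<Union>f\<in>F. Cl t f", folded Span_def] GF] by blast
  ultimately show ?thesis using Ffin by blast
qed



lemma chain_from_append:
  "chain_from s t v (xs @ ys) = (chain_from s t v xs \<and> chain_from s t (if xs = [] then v else t (last xs)) ys)"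
  by (induction xs arbitrary: v) auto

definition delta :: "'p \<Rightarrow> 'p \<Rightarrow> 'k::field" where
  "delta q = (\<lambda>u. if u = q then 1 else 0)"

lemma path_tgt:
  assumes "\<forall>a\<in>A. t a \<in> V" "is_path V A s t p" shows "ptgt t p \<in> V"
proof (cases "snd p = []")
  case False
  then have "last (snd p) \<in> A" using assms(2) last_in_set unfolding is_path_def by blast
  then show ?thesis using assms(1) False by (simp add: ptgt_def)
qed (use assms in \<open>auto simp: is_path_def ptgt_def\<close>)

lemma pathvec_sc:
  fixes V :: "'v set" and A :: "'a set" and s t :: "'a \<Rightarrow> 'v"
  assumes Q: "\<forall>a\<in>A. t a \<in> V"
  shows "subcoalgebra t (pathvec V A s t :: ('v \<times> 'a list \<Rightarrow> 'k::field) set) (pathvec V A s t)"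
proof -
  let ?P = "pathvec V A s t :: ('v \<times> 'a list \<Rightarrow> 'k) set"
  have sub: "subspace ?P"
    unfolding subspace_def
  proof (intro conjI ballI allI)
    show "(\<lambda>u. 0) \<in> ?P" by (simp add: pathvec_def fin_supp_def)
  next
    fix x y assume x: "x \<in> ?P" and y: "y \<in> ?P"
    have "{u. x u + y u \<noteq> 0} \<subseteq> {u. x u \<noteq> 0} \<union> {u. y u \<noteq> 0}" by auto
    then have "fin_supp (\<lambda>u. x u + y u)" using x y unfolding pathvec_def fin_supp_def by (auto intro: finite_subset)
    moreover have "\<forall>p. x p + y p \<noteq> 0 \<longrightarrow> is_path V A s t p"
    proof (intro allI impI)
      fix p assume "x p + y p \<noteq> 0" then have "x p \<noteq> 0 \<or> y p \<noteq> 0" by auto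
      then show "is_path V A s t p" using x y unfolding pathvec_def mem_Collect_eq by blast
    qed
    ultimately show "(\<lambda>u. x u + y u) \<in> ?P" unfolding pathvec_def by simp
  next
    fix c x assume x: "x \<in> ?P"
    have "{u. c * x u \<noteq> 0} \<subseteq> {u. x u \<noteq> 0}" by auto
    then have "fin_supp (\<lambda>u. c * x u)" using x unfolding pathvec_def fin_supp_def by (auto intro: finite_subset)
    moreover have "\<forall>p. c * x p \<noteq> 0 \<longrightarrow> is_path V A s t p"
    proof (intro allI impI)
      fix p assume "c * x p \<noteq> 0" then have "x p \<noteq> 0" by auto
      then show "is_path V A s t p" using x unfolding pathvec_def mem_Collect_eq by blast
    qed
    ultimately show "(\<lambda>u. c * x u) \<in> ?P" unfolding pathvec_def by simp
  qed
  have deltaP: "delta q \<in> ?P" if "is_path V A s t q" for q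
  proof -
    have "{u. delta q u \<noteq> (0::'k)} = {q}" by (auto simp: delta_def)
    then show ?thesis using that unfolding pathvec_def fin_supp_def by (auto simp: delta_def)
  qed
  have "comult t x \<in> tensor ?P ?P" if x: "x \<in> ?P" for x
  proof -
    define Kx where "Kx = {(u,w). ptgt t u = psrc w \<and> x (pcat u w) \<noteq> 0}"
    have parts: "is_path V A s t u \<and> is_path V A s t w" if "(u,w) \<in> Kx" for u w
    proof -
      have k: "ptgt t u = psrc w" "x (pcat u w) \<noteq> 0" using that unfolding Kx_def by auto
      have p: "is_path V A s t (pcat u w)" using x k(2) unfolding pathvec_def by blast
      have c: "chain_from s t (fst u) (snd u @ snd w)" "fst u \<in> V" "set (snd u) \<subseteq> A" "set (snd w) \<subseteq> A"
        using p by (auto simp: is_path_def pcat_def)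
      have fw: "fst w = ptgt t u" using k(1) by (simp add: psrc_def)
      have "ptgt t u \<in> V" using path_tgt[OF Q, of s u] c unfolding is_path_def chain_from_append by simp
      then show ?thesis using c fw unfolding is_path_def chain_from_append ptgt_def by (auto split: if_splits)
    qed
    have finK: "finite Kx"
    proof -
      have inj: "inj_on (\<lambda>(u,w). (pcat u w, length (snd u))) Kx"
      proof (rule inj_onI, clarify)
        fix u w u' w'
        assume a: "(u,w) \<in> Kx" "(u',w') \<in> Kx" "pcat u w = pcat u' w'" "length (snd u) = length (snd u')"
        have 1: "fst u = fst u'" "snd u @ snd w = snd u' @ snd w'" using a(3) by (auto simp: pcat_def)
        then have 2: "snd u = snd u'" "snd w = snd w'" using a(4) by auto
        have "u = u'" using 1(1) 2(1) by (simp add: prod_eq_iff)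
        moreover have "fst w = fst w'" using a(1,2) \<open>u = u'\<close> unfolding Kx_def psrc_def by auto
        ultimately show "u = u' \<and> w = w'" using 2(2) by (simp add: prod_eq_iff)
      qed
      have "(\<lambda>(u,w). (pcat u w, length (snd u))) ` Kx \<subseteq> Sigma {p. x p \<noteq> 0} (\<lambda>p. {..length (snd p)})"
        unfolding Kx_def by (auto simp: pcat_def)
      moreover have "finite (Sigma {p. x p \<noteq> 0} (\<lambda>p. {..length (snd p)}))"
        using x unfolding pathvec_def fin_supp_def by auto
      ultimately show ?thesis using inj finite_subset finite_imageD by blast
    qed
    define a where "a i = (\<lambda>u'. x (pcat (fst i) (snd i)) * delta (fst i) u')" for i :: "('v \<times> 'a list) \<times> ('v \<times> 'a list)"
    define b where "b i = (delta (snd i) :: 'v \<times> 'a list \<Rightarrow> 'k)" for i :: "('v \<times> 'a list) \<times> ('v \<times> 'a list)"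
    have ab: "\<forall>i\<in>Kx. a i \<in> ?P \<and> b i \<in> ?P"
    proof
      fix i assume i: "i \<in> Kx"
      obtain u w where uw: "i = (u,w)" by (rule prod.exhaust)
      have pp: "is_path V A s t u" "is_path V A s t w" using parts i uw by auto
      have "a i = (\<lambda>u'. x (pcat u w) * delta u u')" unfolding a_def uw by simp
      then have "a i \<in> ?P" using subspace_scale[OF sub deltaP[OF pp(1)]] by simp
      moreover have "b i \<in> ?P" unfolding b_def uw using deltaP[OF pp(2)] by simp
      ultimately show "a i \<in> ?P \<and> b i \<in> ?P" by blast
    qed
    have "comult t x = (\<lambda>(u,w). \<Sum>i\<in>Kx. a i u * b i w)"
    proof
      fix uw :: "('v \<times> 'a list) \<times> ('v \<times> 'a list)"
      obtain u w where uw: "uw = (u,w)" by (rule prod.exhaust)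
      have "(\<Sum>i\<in>Kx. a i u * b i w) = (\<Sum>i\<in>Kx. if i = (u,w) then x (pcat u w) else 0)"
        by (rule sum.cong) (auto simp: a_def b_def delta_def)
      also have "\<dots> = (if (u,w) \<in> Kx then x (pcat u w) else 0)" using finK by (simp add: sum.delta')
      also have "\<dots> = comult t x (u,w)" unfolding Kx_def comult_def by auto
      finally show "comult t x uw = (\<lambda>(u,w). \<Sum>i\<in>Kx. a i u * b i w) uw" unfolding uw by simp
    qed
    then show ?thesis using tensor_intro[OF finK ab] by simp
  qed
  then show ?thesis unfolding subcoalgebra_def using sub by blast
qed

lemma pathvec_mono: "V \<subseteq> V' \<Longrightarrow> A \<subseteq> A' \<Longrightarrow> pathvec V A s t \<subseteq> pathvec V' A' s t"
  unfolding pathvec_def is_path_def by blast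



lemma liftQ_OV:
  fixes x :: "'v \<times> 'a list \<Rightarrow> 'k::zero"
  shows "liftQ x (OV v, map OA bs) = x (v, bs)"
proof -
  have inj: "inj (OA :: 'a \<Rightarrow> ('v,'a,'k) arr)" by (auto intro: injI)
  have "(SOME vb. ((OV v, map OA bs) :: ('v,'a,'k) bpath) = (OV (fst vb), map OA (snd vb))) = (v, bs)"
  proof (rule some_equality)
    fix vb assume "((OV v, map OA bs) :: ('v,'a,'k) bpath) = (OV (fst vb), map OA (snd vb))"
    then have "v = fst vb" "bs = snd vb" using inj_map_eq_map[OF inj] by auto
    then show "vb = (v, bs)" by simp
  qed simp
  moreover have "liftQ x (OV v, map OA bs) = x (SOME vb. ((OV v, map OA bs) :: ('v,'a,'k) bpath) = (OV (fst vb), map OA (snd vb)))"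
    unfolding liftQ_def by (subst if_P) blast+
  ultimately show ?thesis by simp
qed

lemma liftQ_other: "\<not> (\<exists>v bs. p = (OV v, map OA bs)) \<Longrightarrow> liftQ x p = 0"
  unfolding liftQ_def by simp

lemma liftQ_nz: "liftQ x p \<noteq> 0 \<Longrightarrow> \<exists>v bs. p = (OV v, map OA bs)"
  using liftQ_other by blast

lemma liftQ_cases:
  obtains v bs where "p = (OV v, map OA bs)" | "\<not> (\<exists>v bs. p = (OV v, map OA bs))"
  by blast

lemma liftQ_add:
  fixes x y :: "'v \<times> 'a list \<Rightarrow> 'k::field"
  shows "liftQ (\<lambda>u. x u + y u) = (\<lambda>p. liftQ x p + liftQ y p)"
proof
  fix p show "liftQ (\<lambda>u. x u + y u) p = liftQ x p + liftQ y p"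
    by (cases p rule: liftQ_cases) (simp_all add: liftQ_OV liftQ_other)
qed

lemma liftQ_scale:
  fixes x :: "'v \<times> 'a list \<Rightarrow> 'k::field"
  shows "liftQ (\<lambda>u. c * x u) = (\<lambda>p. c * liftQ x p)"
proof
  fix p show "liftQ (\<lambda>u. c * x u) p = c * liftQ x p"
    by (cases p rule: liftQ_cases) (simp_all add: liftQ_OV liftQ_other)
qed

lemma liftQ_zero: "liftQ (\<lambda>u::'v \<times> 'a list. 0::'k::field) = (\<lambda>p. 0)"
proof
  fix p show "liftQ (\<lambda>u. 0) p = 0"
    by (cases p rule: liftQ_cases) (simp_all add: liftQ_OV liftQ_other)
qed

lemma chain_lift: "chain_from (XS s t) (XT t) (OV v) (map OA bs) = chain_from s t v bs"
  by (induction bs arbitrary: v) auto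

lemma ptgt_lift: "ptgt (XT t) (OV v, map OA bs) = OV (ptgt t (v, bs))"
  by (cases "bs = []") (auto simp: ptgt_def last_map)

lemma pcat_lift_form:
  assumes "pcat u w = (OV v, map OA cs)" "ptgt (XT t) u = psrc w"
  shows "(\<exists>v bs. u = (OV v, map OA bs)) \<and> (\<exists>v bs. w = (OV v, map OA bs))"
proof -
  have 1: "fst u = OV v" "snd u @ snd w = map OA cs" using assms(1) by (auto simp: pcat_def)
  obtain c1 c2 where c: "snd u = map OA c1" "snd w = map OA c2" using 1(2)[symmetric] by (metis map_eq_append_conv)
  have u: "u = (OV v, map OA c1)" using 1(1) c(1) by (simp add: prod_eq_iff)
  have "fst w = ptgt (XT t) u" using assms(2) by (simp add: psrc_def)
  also have "\<dots> = OV (ptgt t (v, c1))" unfolding u by (rule ptgt_lift)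
  finally have "w = (OV (ptgt t (v, c1)), map OA c2)" using c(2) by (simp add: prod_eq_iff)
  then show ?thesis using u by blast
qed

lemma level0_sc:
  fixes V :: "'v set" and A :: "'a set" and s t :: "'a \<Rightarrow> 'v" and C :: "('v \<times> 'a list \<Rightarrow> 'k::field) set"
  assumes Q: "\<forall>a\<in>A. s a \<in> V \<and> t a \<in> V" and subC: "subcoalgebra t (pathvec V A s t) C"
  shows "subcoalgebra (XT t) (pathvec (OV ` V) (OA ` A) (XS s t) (XT t)) (liftQ ` C)"
proof -
  have sC: "subspace C" using subC by (rule sc_subspace)
  have sub: "subspace (liftQ ` C)"
    unfolding subspace_def
  proof (intro conjI ballI allI)
    have "liftQ (\<lambda>u. 0) \<in> liftQ ` C" using subspace_zero[OF sC] by (rule imageI)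
    then show "(\<lambda>u. 0) \<in> liftQ ` C" unfolding liftQ_zero .
  next
    fix x y assume "x \<in> liftQ ` C" "y \<in> liftQ ` C"
    then obtain x' y' where "x' \<in> C" "y' \<in> C" "x = liftQ x'" "y = liftQ y'" by blast
    then have "liftQ (\<lambda>u. x' u + y' u) \<in> liftQ ` C" using subspace_add[OF sC] by blast
    then show "(\<lambda>u. x u + y u) \<in> liftQ ` C" unfolding liftQ_add \<open>x = liftQ x'\<close> \<open>y = liftQ y'\<close> .
  next
    fix c x assume "x \<in> liftQ ` C"
    then obtain x' where "x' \<in> C" "x = liftQ x'" by blast
    then have "liftQ (\<lambda>u. c * x' u) \<in> liftQ ` C" using subspace_scale[OF sC] by blast
    then show "(\<lambda>u. c * x u) \<in> liftQ ` C" unfolding liftQ_scale \<open>x = liftQ x'\<close> .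
  qed
  have inP: "liftQ x \<in> pathvec (OV ` V) (OA ` A) (XS s t) (XT t)" if x: "x \<in> C" for x
  proof -
    have xP: "x \<in> pathvec V A s t" using subC x unfolding subcoalgebra_def by blast
    have "{p. liftQ x p \<noteq> 0} \<subseteq> (\<lambda>(v,bs). (OV v, map OA bs)) ` {p. x p \<noteq> 0}"
    proof
      fix p assume p: "p \<in> {p. liftQ x p \<noteq> 0}"
      then obtain v bs where "p = (OV v, map OA bs)" using liftQ_nz p by blast
      then show "p \<in> (\<lambda>(v,bs). (OV v, map OA bs)) ` {p. x p \<noteq> 0}" using p by (auto simp: liftQ_OV)
    qed
    then have "fin_supp (liftQ x)" using xP unfolding pathvec_def fin_supp_def by (auto intro: finite_subset)
    moreover have "is_path (OV ` V) (OA ` A) (XS s t) (XT t) p" if nz: "liftQ x p \<noteq> 0" for p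
    proof -
      obtain v bs where p: "p = (OV v, map OA bs)" using liftQ_nz[OF nz] by blast
      have "x (v, bs) \<noteq> 0" using nz p by (simp add: liftQ_OV)
      then have "is_path V A s t (v, bs)" using xP unfolding pathvec_def by blast
      then show ?thesis unfolding p is_path_def by (auto simp: chain_lift)
    qed
    ultimately show ?thesis unfolding pathvec_def by blast
  qed
  have "comult (XT t) y \<in> tensor (liftQ ` C) (liftQ ` C)" if y: "y \<in> liftQ ` C" for y
  proof -
    obtain x where x: "x \<in> C" "y = liftQ x" using y by blast
    have "comult t x \<in> tensor C C" using subC x unfolding subcoalgebra_def by blast
    then obtain K :: "(('v \<times> 'a list) \<times> ('v \<times> 'a list) \<Rightarrow> 'k) set" and a b where
      K: "finite K" "\<forall>i\<in>K. a i \<in> C \<and> b i \<in> C" "comult t x = (\<lambda>(u,w). \<Sum>i\<in>K. a i u * b i w)"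
      by (rule tensor_elim[OF sC])
    have "comult (XT t) (liftQ x) = (\<lambda>(u,w). \<Sum>i\<in>K. liftQ (a i) u * liftQ (b i) w)"
    proof
      fix uw :: "(('v, 'a, 'k) vtx \<times> ('v, 'a, 'k) arr list) \<times> (('v, 'a, 'k) vtx \<times> ('v, 'a, 'k) arr list)"
      obtain u w where uw: "uw = (u, w)" by (rule prod.exhaust)
      show "comult (XT t) (liftQ x) uw = (\<lambda>(u,w). \<Sum>i\<in>K. liftQ (a i) u * liftQ (b i) w) uw"
      proof (cases "(\<exists>v bs. u = (OV v, map OA bs)) \<and> (\<exists>v bs. w = (OV v, map OA bs))")
        case True
        then obtain v bs v' bs' where u: "u = (OV v, map OA bs)" and w: "w = (OV v', map OA bs')" by blast
        have "(\<Sum>i\<in>K. liftQ (a i) u * liftQ (b i) w) = (\<Sum>i\<in>K. a i (v,bs) * b i (v',bs'))"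
          by (simp add: u w liftQ_OV)
        also have "\<dots> = comult t x ((v,bs),(v',bs'))" using fun_cong[OF K(3), of "((v,bs),(v',bs'))"] by simp
        also have "\<dots> = comult (XT t) (liftQ x) (u, w)"
          unfolding u w comult_def by (simp add: ptgt_lift psrc_def pcat_def liftQ_OV flip: map_append)
        finally show ?thesis unfolding uw by simp
      next
        case False
        have "liftQ (a i) u * liftQ (b i) w = 0" for i using False by (auto simp: liftQ_other)
        then have "(\<lambda>(u,w). \<Sum>i\<in>K. liftQ (a i) u * liftQ (b i) w) uw = 0" unfolding uw by (simp add: sum.neutral)
        moreover have "comult (XT t) (liftQ x) (u, w) = 0"
        proof (cases "ptgt (XT t) u = psrc w")
          case True
          have "\<not> (\<exists>v bs. pcat u w = (OV v, map OA bs))" using pcat_lift_form[OF _ True] False by blast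
          then show ?thesis by (simp add: comult_def liftQ_other)
        qed (simp add: comult_def)
        ultimately show ?thesis unfolding uw by simp
      qed
    qed
    moreover have "(\<lambda>(u,w). \<Sum>i\<in>K. liftQ (a i) u * liftQ (b i) w) \<in> tensor (liftQ ` C) (liftQ ` C)"
      by (rule tensor_intro[OF K(1)]) (use K(2) in blast)
    ultimately show ?thesis using x(2) by simp
  qed
  then show ?thesis unfolding subcoalgebra_def using sub inP by blast
qed



lemma enc_mem:
  assumes "fin_supp x"
  shows "(z |\<in>| enc x) = (x (fst z) \<noteq> 0 \<and> snd z = x (fst z))"
proof -
  have S: "{(p, x p) | p. x p \<noteq> 0} = (\<lambda>p. (p, x p)) ` {p. x p \<noteq> 0}" by auto
  have "finite {(p, x p) | p. x p \<noteq> 0}" unfolding S using assms unfolding fin_supp_def by simp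
  then have "fset (enc x) = {(p, x p) | p. x p \<noteq> 0}" unfolding enc_def by (simp add: Abs_fset_inverse)
  then show ?thesis by (cases z) auto
qed

lemma enc_inj:
  assumes "fin_supp x" "fin_supp y" "enc x = enc y" shows "x = y"
proof
  fix u
  show "x u = y u"
  proof (cases "x u = 0")
    case True
    show ?thesis
    proof (rule ccontr)
      assume "x u \<noteq> y u"
      then have "(u, y u) |\<in>| enc y" using True enc_mem[OF assms(2)] by simp
      then have "(u, y u) |\<in>| enc x" using assms(3) by simp
      then show False using True enc_mem[OF assms(1)] by simp
    qed
  next
    case False
    then have "(u, x u) |\<in>| enc x" using enc_mem[OF assms(1)] by simp
    then have "(u, x u) |\<in>| enc y" using assms(3) by simp
    then show ?thesis using enc_mem[OF assms(2)] by simp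
  qed
qed

lemma qF_nz:
  assumes "qF n F r \<noteq> 0"
  shows "\<exists>p\<in>F. snd r \<noteq> [] \<and> last (snd r) = NA n (enc p) (encF F) \<and> p (fst r, butlast (snd r)) \<noteq> 0"
proof (rule ccontr)
  assume "\<not> ?thesis"
  then have "qF n F r = 0" unfolding qF_def by (intro sum.neutral) auto
  then show False using assms by simp
qed

lemma XS_NA:
  assumes fs: "fin_supp p" and mp: "multipath (XT t) p" and q: "p q \<noteq> 0"
  shows "XS s t (NA m (enc p) G) = ptgt (XT t) q"
proof -
  obtain v w where vw: "\<forall>u. p u \<noteq> 0 \<longrightarrow> psrc u = v \<and> ptgt (XT t) u = w" using mp unfolding multipath_def by blast
  have "(q, p q) |\<in>| enc p" using enc_mem[OF fs] q by simp
  then have "\<exists>z. z |\<in>| enc p" by blast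
  then have "(SOME z. z |\<in>| enc p) |\<in>| enc p" by (rule someI_ex)
  then have "p (fst (SOME z. z |\<in>| enc p)) \<noteq> 0" using enc_mem[OF fs] by simp
  then have "ptgt (XT t) (fst (SOME z. z |\<in>| enc p)) = w" using vw by blast
  moreover have "ptgt (XT t) q = w" using vw q by blast
  ultimately show ?thesis by simp
qed

lemma rc_qF:
  assumes Ffin: "finite F" and Fmp: "\<forall>p\<in>F. multipath (XT t) p" and f: "f \<in> F"
    and w: "\<forall>u. f u \<noteq> 0 \<longrightarrow> ptgt (XT t) u = w"
  shows "rc (XT t) (qF n F) (w, [NA n (enc f) (encF F)]) = f"
proof
  fix u
  have fs: "fin_supp p" if "p \<in> F" for p using Fmp that unfolding multipath_def by blast
  have eqp: "(enc f = enc p) = (p = f)" if p: "p \<in> F" for p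
    using enc_inj[OF fs[OF p] fs[OF f]] by auto
  have "qF n F (pcat u (w, [NA n (enc f) (encF F)])) = (\<Sum>p\<in>F. if p = f then p u else 0)"
    unfolding qF_def pcat_def by (intro sum.cong refl) (simp add: eqp)
  also have "\<dots> = f u" using Ffin f by (simp add: sum.delta')
  finally have e: "qF n F (pcat u (w, [NA n (enc f) (encF F)])) = f u" .
  show "rc (XT t) (qF n F) (w, [NA n (enc f) (encF F)]) u = f u"
  proof (cases "ptgt (XT t) u = w")
    case True then show ?thesis unfolding rc_def comult_def using e by (simp add: psrc_def)
  next
    case False
    then have "f u = 0" using w by blast
    then show ?thesis unfolding rc_def comult_def using False by (simp add: psrc_def)
  qed
qed

definition INV :: "('a \<Rightarrow> 'v) \<Rightarrow> ('a \<Rightarrow> 'v) \<Rightarrow> ('v, 'a, 'k) vtx set \<times> ('v, 'a, 'k) arr set \<times> (('v, 'a, 'k) bpath \<Rightarrow> 'k::field) set \<Rightarrow> bool" where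
  "INV s t X = ((\<forall>a\<in>fst (snd X). XT t a \<in> fst X) \<and>
     subcoalgebra (XT t) (pathvec (fst X) (fst (snd X)) (XS s t) (XT t)) (snd (snd X)))"

lemma INV_step:
  fixes Vn :: "('v, 'a, 'k::field) vtx set" and An :: "('v, 'a, 'k) arr set" and Dn :: "(('v, 'a, 'k) bpath \<Rightarrow> 'k) set" and n :: nat
  assumes inv: "INV s t (Vn, An, Dn)"
  defines "Fs \<equiv> {F. finite F \<and> independent (XT t) Dn F}"
  defines "V' \<equiv> Vn \<union> {NV n (encF F) | F. F \<in> Fs}"
  defines "A' \<equiv> An \<union> {NA n (enc p) (encF F) | F p. F \<in> Fs \<and> p \<in> F}"
  shows "INV s t (V', A', gen_subcoalg (XT t) (pathvec V' A' (XS s t) (XT t)) (Dn \<union> {qF n F | F. F \<in> Fs}))"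
proof -
  have Qn: "\<forall>a\<in>An. XT t a \<in> Vn" and scn: "subcoalgebra (XT t) (pathvec Vn An (XS s t) (XT t)) Dn"
    using inv unfolding INV_def by auto
  have Q': "\<forall>a\<in>A'. XT t a \<in> V'"
  proof
    fix a assume "a \<in> A'"
    then show "XT t a \<in> V'"
    proof (cases "a \<in> An")
      case True then show ?thesis using Qn unfolding V'_def by blast
    next
      case False
      then obtain F p where "F \<in> Fs" "a = NA n (enc p) (encF F)" using \<open>a \<in> A'\<close> unfolding A'_def by blast
      then show ?thesis unfolding V'_def by auto
    qed
  qed
  let ?K = "pathvec V' A' (XS s t) (XT t) :: (('v, 'a, 'k) bpath \<Rightarrow> 'k) set"
  have VV: "Vn \<subseteq> V'" unfolding V'_def by blast
  have AA: "An \<subseteq> A'" unfolding A'_def by blast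
  have DK: "Dn \<subseteq> ?K" using scn pathvec_mono[OF VV AA] unfolding subcoalgebra_def by blast
  have qK: "qF n F \<in> ?K" if F: "F \<in> Fs" for F
  proof -
    have Ffin: "finite F" and ind: "independent (XT t) Dn F" using F unfolding Fs_def by auto
    have pD: "p \<in> Dn" and pmp: "multipath (XT t) p" if "p \<in> F" for p
      using ind that unfolding independent_def MP_def by auto
    have pfs: "fin_supp p" if "p \<in> F" for p using pmp[OF that] unfolding multipath_def by blast
    have pP: "p \<in> pathvec Vn An (XS s t) (XT t)" if "p \<in> F" for p using pD[OF that] scn unfolding subcoalgebra_def by blast
    have "{r. qF n F r \<noteq> 0} \<subseteq> (\<Union>p\<in>F. (\<lambda>q. (fst q, snd q @ [NA n (enc p) (encF F)])) ` {q. p q \<noteq> 0})"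
    proof
      fix r assume "r \<in> {r. qF n F r \<noteq> 0}"
      then obtain p where p: "p \<in> F" "snd r \<noteq> []" "last (snd r) = NA n (enc p) (encF F)" "p (fst r, butlast (snd r)) \<noteq> 0"
        using qF_nz by blast
      have "r = (fst (fst r, butlast (snd r)), snd (fst r, butlast (snd r)) @ [NA n (enc p) (encF F)])"
        using p(2,3) append_butlast_last_id[OF p(2)] by (simp add: prod_eq_iff)
      then show "r \<in> (\<Union>p\<in>F. (\<lambda>q. (fst q, snd q @ [NA n (enc p) (encF F)])) ` {q. p q \<noteq> 0})"
        using p(1,4) by blast
    qed
    moreover have "finite (\<Union>p\<in>F. (\<lambda>q. (fst q, snd q @ [NA n (enc p) (encF F)])) ` {q. p q \<noteq> 0})"
      using Ffin pfs unfolding fin_supp_def by blast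
    ultimately have "fin_supp (qF n F)" unfolding fin_supp_def by (rule finite_subset)
    moreover have "is_path V' A' (XS s t) (XT t) r" if nz: "qF n F r \<noteq> 0" for r
    proof -
      obtain p where p: "p \<in> F" "snd r \<noteq> []" "last (snd r) = NA n (enc p) (encF F)" "p (fst r, butlast (snd r)) \<noteq> 0"
        using qF_nz[OF nz] by blast
      let ?q = "(fst r, butlast (snd r))"
      have qp: "is_path Vn An (XS s t) (XT t) ?q" using pP[OF p(1)] p(4) unfolding pathvec_def by blast
      have sr: "snd r = butlast (snd r) @ [NA n (enc p) (encF F)]" using p(2,3) append_butlast_last_id[OF p(2)] by simp
      have NA: "NA n (enc p) (encF F) \<in> A'" unfolding A'_def using F p(1) by blast
      have xs: "XS s t (NA n (enc p) (encF F)) = ptgt (XT t) ?q" by (rule XS_NA[OF pfs[OF p(1)] pmp[OF p(1)] p(4)])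
      have "fst r \<in> V'" using qp VV unfolding is_path_def by auto
      moreover have "set (snd r) \<subseteq> A'"
      proof -
        have "set (snd r) = set (butlast (snd r)) \<union> {NA n (enc p) (encF F)}" by (subst sr) simp
        moreover have "set (butlast (snd r)) \<subseteq> An" using qp unfolding is_path_def by simp
        ultimately show ?thesis using AA NA by blast
      qed
      moreover have "chain_from (XS s t) (XT t) (fst r) (snd r)"
      proof -
        have "chain_from (XS s t) (XT t) (fst r) (butlast (snd r))" using qp unfolding is_path_def by simp
        moreover have "XS s t (NA n (enc p) (encF F)) = (if butlast (snd r) = [] then fst r else XT t (last (butlast (snd r))))"
          unfolding xs by (simp add: ptgt_def)
        ultimately show ?thesis by (subst sr, simp only: chain_from_append) simp
      qed
      ultimately show ?thesis unfolding is_path_def by blast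
    qed
    ultimately show ?thesis unfolding pathvec_def by blast
  qed
  have GK: "Dn \<union> {qF n F | F. F \<in> Fs} \<subseteq> ?K" using DK qK by blast
  have KK: "subcoalgebra (XT t) ?K ?K" by (rule pathvec_sc[OF Q'])
  have "subcoalgebra (XT t) ?K (\<Inter>{S. subcoalgebra (XT t) ?K S \<and> Dn \<union> {qF n F | F. F \<in> Fs} \<subseteq> S})"
    by (rule sc_Inter) (use KK GK in blast)+
  then show ?thesis unfolding INV_def gen_subcoalg_def using Q' by simp
qed

lemma INV_all:
  fixes V :: "'v set" and A :: "'a set" and s t :: "'a \<Rightarrow> 'v" and C :: "('v \<times> 'a list \<Rightarrow> 'k::field) set"
  assumes Q: "\<forall>a\<in>A. s a \<in> V \<and> t a \<in> V" and subC: "subcoalgebra t (pathvec V A s t) C"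
  shows "INV s t (TT s t V A C n)"
proof (induction n)
  case 0
  have "\<forall>a\<in>OA ` A. XT t a \<in> OV ` V" using Q by auto
  then show ?case unfolding INV_def using level0_sc[OF Q subC] by simp
next
  case (Suc n)
  obtain Vn An Dn where eq: "TT s t V A C n = (Vn, An, Dn)" by (rule prod_cases3)
  have "INV s t (Vn, An, Dn)" using Suc eq by simp
  note st = INV_step[OF this, of n]
  show ?case using st eq by (simp add: Let_def)
qed

lemma TCn_sc:
  assumes Q: "\<forall>a\<in>A. s a \<in> V \<and> t a \<in> V" and subC: "subcoalgebra t (pathvec V A s t) C"
  shows "\<exists>Vn An. subcoalgebra (XT t) (pathvec Vn An (XS s t) (XT t)) (TCn s t V A C n)"
  using INV_all[OF Q subC, of n] unfolding INV_def TCn_def by blast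

lemma TCn_Suc: "TCn s t V A C n \<subseteq> TCn s t V A C (Suc n)"
proof -
  obtain Vn An Dn where eq: "TT s t V A C n = (Vn, An, Dn)" by (rule prod_cases3)
  show ?thesis unfolding TCn_def by (simp add: Let_def eq gen_subcoalg_def) blast
qed

lemma TCn_mono: "m \<le> n \<Longrightarrow> TCn s t V A C m \<subseteq> TCn s t V A C n"
  by (induction n rule: dec_induct) (auto intro: TCn_Suc[THEN subsetD])



lemma fin_in_TCn:
  assumes "finite X" "X \<subseteq> TC s t V A C"
  shows "\<exists>N. X \<subseteq> TCn s t V A C N"
  using assms
proof (induction X rule: finite_induct)
  case empty then show ?case by blast
next
  case (insert x X)
  then obtain N1 where N1: "X \<subseteq> TCn s t V A C N1" by blast
  obtain k where k: "x \<in> TCn s t V A C k" using insert(4) unfolding TC_def by blast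
  have "X \<subseteq> TCn s t V A C (max N1 k)" using N1 TCn_mono[of N1 "max N1 k" s t V A C] by auto
  moreover have "x \<in> TCn s t V A C (max N1 k)" using k TCn_mono[of k "max N1 k" s t V A C] by auto
  ultimately show ?case by blast
qed

theorem proposition4p25:
  fixes V :: "'v set" and A :: "'a set" and s t :: "'a \<Rightarrow> 'v"
    and C :: "('v \<times> 'a list \<Rightarrow> 'k::field) set"
    and I :: "(('v, 'a, 'k) bpath \<Rightarrow> 'k) set"
  assumes quiver: "\<forall>a\<in>A. s a \<in> V \<and> t a \<in> V"
    and subC: "subcoalgebra t (pathvec V A s t) C"
    and coid: "right_coideal (XT t) (TC s t V A C) I"
    and fd: "fin_dim I"
  shows "\<exists>n F. finite F \<and> independent (XT t) (TCn s t V A C n) F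
               \<and> I \<subseteq> coideal_gen (XT t) (TC s t V A C) (qF n F)"
proof -
  obtain B where B: "finite B" "I = lspan B" using fd unfolding fin_dim_def by blast
  have BI: "B \<subseteq> I" using B(2) lspan_base by blast
  have ITC: "I \<subseteq> TC s t V A C" using coid unfolding right_coideal_def by blast
  obtain N where N: "B \<subseteq> TCn s t V A C N" using fin_in_TCn[OF B(1)] BI ITC by blast
  obtain Vn An where sc: "subcoalgebra (XT t) (pathvec Vn An (XS s t) (XT t)) (TCn s t V A C N)"
    using TCn_sc[OF quiver subC] by blast
  have Kf: "\<forall>x\<in>pathvec Vn An (XS s t) (XT t). fin_supp x" unfolding pathvec_def by blast
  obtain F where F: "finite F" "independent (XT t) (TCn s t V A C N) F" "B \<subseteq> Span (XT t) F"
    using choose_F[OF sc Kf B(1) N] by blast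
  have Fmp: "\<forall>p\<in>F. multipath (XT t) p" using F(2) unfolding independent_def MP_def by blast
  have "I \<subseteq> coideal_gen (XT t) (TC s t V A C) (qF N F)"
    unfolding coideal_gen_def
  proof (rule Inter_greatest)
    fix J assume "J \<in> {J. right_coideal (XT t) (TC s t V A C) J \<and> qF N F \<in> J}"
    then have J: "right_coideal (XT t) (TC s t V A C) J" "qF N F \<in> J" by auto
    have sJ: "subspace J" using J(1) unfolding right_coideal_def by blast
    have fJ: "f \<in> J" if f: "f \<in> F" for f
    proof -
      obtain v w where vw: "\<forall>u. f u \<noteq> 0 \<longrightarrow> psrc u = v \<and> ptgt (XT t) u = w"
        using Fmp f unfolding multipath_def by blast
      have "rc (XT t) (qF N F) (w, [NA N (enc f) (encF F)]) = f"
        by (rule rc_qF[OF F(1) Fmp f]) (use vw in blast)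
      then show ?thesis using rcoid_rc[OF J] by metis
    qed
    have "Span (XT t) F \<subseteq> J" unfolding Span_def
      by (rule lspan_subset[OF sJ]) (use rcoid_Cl[OF J(1)] fJ in blast)
    then show "I \<subseteq> J" unfolding B(2) using F(3) by (intro lspan_subset[OF sJ]) blast
  qed
  then show ?thesis using F(1,2) by blast
qed


end
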